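(* Let $C\ge 2$ and $D$ be positive integers, and let $\mu_1,\dots,\mu_C\in\mathbb{R}^D$ be unit vectors forming a regular simplex, i.e. $\|\mu_j\|=1$ for all $j$ and $\mu_j^\top\mu_{j'}=-\frac{1}{C-1}$ for all $j\neq j'$. Let $\alpha\in[0,\pi/2]$ and let $A\in\mathbb{R}^{D\times D}$ be a real matrix with $A^\top=-A$ and $A^2=-I$. Put $R=\cos\alpha\, I+\sin\alpha\, A$ and $w_j=R\mu_j$ for $j=1,\dots,C$, and assume $\mu_j^\top w_j=\cos\alpha$ for every $j$. Then for every fixed class $c$ and every $c'\neq c$, $$\mu_c^\top w_{c'}=-\frac{\cos\alpha}{C-1}+\zeta_{c,c'},\qquad \zeta_{c,c'}:=\sin\alpha\;\mu_c^\top A\,\mu_{c'},$$ and the residuals satisfy $\sum_{c'\neq c}\zeta_{c,c'}=0$.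
   Context: Since the $\mu_j$ are unit vectors, they coincide with their normalizations $\hat\mu_j=\mu_j/\|\mu_j\|$; likewise $R$ is orthogonal, so $\hat w_j=w_j$. *)

theory Defs
  imports "HOL-Analysis.Analysis"
begin

end

theory Submission
  imports Defs
begin

lemma mvneg: "(- M) *v (y::real^'n) = - (M *v y)"
  by (simp add: vec_eq_iff matrix_vector_mult_def sum_negf)

lemma mvscale: "(a *\<^sub>R M) *v (y::real^'n) = a *\<^sub>R (M *v y)"
  by (simp add: vec_eq_iff matrix_vector_mult_def sum_distrib_left mult.assoc)

lemma mvadd: "(M + N) *v (y::real^'n) = M *v y + N *v y"
  by (simp add: vec_eq_iff matrix_vector_mult_def sum.distrib algebra_simps)

lemma skew_zero:
  fixes A :: "real ^ 'd ^ 'd" and x :: "real ^ 'd"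
  assumes "transpose A = - A"
  shows "x \<bullet> (A *v x) = 0"
proof -
  have "x \<bullet> (A *v x) = (x v* A) \<bullet> x"
    by (simp add: dot_lmul_matrix)
  also have "x v* A = transpose A *v x" by simp
  also have "\<dots> = - (A *v x)" using assms by (simp add: mvneg)
  finally show ?thesis by (simp add: inner_commute)
qed

theorem lemma3:
  fixes C :: nat and \<mu> :: "nat \<Rightarrow> real ^ 'd" and \<alpha> :: real
    and A :: "real ^ 'd ^ 'd"
  assumes hC: "C \<ge> 2"
    and hunit: "\<And>j. j \<in> {1..C} \<Longrightarrow> norm (\<mu> j) = 1"
    and hsimp: "\<And>j j'. j \<in> {1..C} \<Longrightarrow> j' \<in> {1..C} \<Longrightarrow> j \<noteq> j' \<Longrightarrow>
                 \<mu> j \<bullet> \<mu> j' = - 1 / (real C - 1)"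
    and h\<alpha>: "\<alpha> \<in> {0..pi/2}"
    and hskew: "transpose A = - A"
    and hsq: "A ** A = - mat 1"
    and hdiag: "\<And>j. j \<in> {1..C} \<Longrightarrow>
                 \<mu> j \<bullet> ((cos \<alpha> *\<^sub>R mat 1 + sin \<alpha> *\<^sub>R A) *v \<mu> j) = cos \<alpha>"
    and hc: "c \<in> {1..C}"
  shows "(\<forall>c'\<in>{1..C}. c' \<noteq> c \<longrightarrow>
            \<mu> c \<bullet> ((cos \<alpha> *\<^sub>R mat 1 + sin \<alpha> *\<^sub>R A) *v \<mu> c')
              = - cos \<alpha> / (real C - 1) + sin \<alpha> * (\<mu> c \<bullet> (A *v \<mu> c')))
         \<and> (\<Sum>c'\<in>{1..C} - {c}. sin \<alpha> * (\<mu> c \<bullet> (A *v \<mu> c'))) = 0"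
proof
  have expand: "\<mu> c \<bullet> ((cos \<alpha> *\<^sub>R mat 1 + sin \<alpha> *\<^sub>R A) *v y)
        = cos \<alpha> * (\<mu> c \<bullet> y) + sin \<alpha> * (\<mu> c \<bullet> (A *v y))" for y
    by (simp add: mvadd mvscale inner_add_right)
  show "\<forall>c'\<in>{1..C}. c' \<noteq> c \<longrightarrow>
            \<mu> c \<bullet> ((cos \<alpha> *\<^sub>R mat 1 + sin \<alpha> *\<^sub>R A) *v \<mu> c')
              = - cos \<alpha> / (real C - 1) + sin \<alpha> * (\<mu> c \<bullet> (A *v \<mu> c'))"
    using hsimp[OF hc] by (simp add: expand)
  define S where "S = (\<Sum>j\<in>{1..C}. \<mu> j)"
  have C1: "real C - 1 \<noteq> 0" using hC by simp
  have row: "(\<Sum>k\<in>{1..C}. \<mu> j \<bullet> \<mu> k) = 0" if j: "j \<in> {1..C}" for j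
  proof -
    have "(\<Sum>k\<in>{1..C}. \<mu> j \<bullet> \<mu> k) = \<mu> j \<bullet> \<mu> j + (\<Sum>k\<in>{1..C} - {j}. \<mu> j \<bullet> \<mu> k)"
      using j by (simp add: sum.remove)
    also have "\<mu> j \<bullet> \<mu> j = 1" using hunit[OF j] by (simp add: dot_square_norm)
    also have "(\<Sum>k\<in>{1..C} - {j}. \<mu> j \<bullet> \<mu> k) = (\<Sum>k\<in>{1..C} - {j}. - 1 / (real C - 1))"
      by (rule sum.cong) (use hsimp[OF j] in auto)
    also have "\<dots> = - 1" using j C1 hC by (simp add: card_Diff_singleton of_nat_diff field_simps)
    finally show ?thesis using C1 by simp
  qed
  have "S \<bullet> S = (\<Sum>j\<in>{1..C}. \<Sum>k\<in>{1..C}. \<mu> j \<bullet> \<mu> k)"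
    unfolding S_def by (simp add: inner_sum_left inner_sum_right) (rule sum.swap)
  also have "\<dots> = 0" using row by simp
  finally have S0: "S = 0" by simp
  have "(\<Sum>c'\<in>{1..C} - {c}. \<mu> c') = S - \<mu> c"
    unfolding S_def using hc by (simp add: sum.remove)
  hence "(\<Sum>c'\<in>{1..C} - {c}. \<mu> c') = - \<mu> c" using S0 by simp
  hence "(\<Sum>c'\<in>{1..C} - {c}. \<mu> c \<bullet> (A *v \<mu> c')) = \<mu> c \<bullet> (A *v (- \<mu> c))"
  proof -
    have "(\<Sum>c'\<in>{1..C} - {c}. \<mu> c \<bullet> (A *v \<mu> c')) = \<mu> c \<bullet> (\<Sum>c'\<in>{1..C} - {c}. A *v \<mu> c')"
      by (simp add: inner_sum_right)
    also have "(\<Sum>c'\<in>{1..C} - {c}. A *v \<mu> c') = A *v (\<Sum>c'\<in>{1..C} - {c}. \<mu> c')"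
      using linear_sum[OF matrix_vector_mul_linear[of A], of \<mu> "{1..C} - {c}"] by simp
    finally show ?thesis using \<open>(\<Sum>c'\<in>{1..C} - {c}. \<mu> c') = - \<mu> c\<close> by simp
  qed
  also have "\<dots> = 0" using skew_zero[OF hskew, of "\<mu> c"]
    using linear_neg[OF matrix_vector_mul_linear[of A], of "\<mu> c"] by simp
  finally show "(\<Sum>c'\<in>{1..C} - {c}. sin \<alpha> * (\<mu> c \<bullet> (A *v \<mu> c'))) = 0"
    by (simp add: sum_distrib_left[symmetric])
qed

end
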